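(* Let $G$ and $K$ be finite sets, let $\beta:G\rightarrow K$ be a surjective function, let $U\subseteq\Lambda^G$ be such that $\Xi_\beta(U)=\Lambda^K$, and let $f^*:K\rightarrow\mathbb R^+$. Then for every $p\in U$ and every $\epsilon>0$ there exists $\delta'>0$ such that for every $\delta\ge 0$ with $\delta<\delta'$ and every function $f:G\rightarrow\mathbb R^+$ whose thematic mean divergence with respect to $f^*$ on $U$ under $\beta$ is bounded by $\delta$, we have \[d(\Xi_\beta(\mathcal S_f p),\,\mathcal S_{f^*}(\Xi_\beta p))<\epsilon.\]
   Context: $\mathbb R^+$ denotes the positive reals. For a set $X$, $\Lambda^X$ is the set of functions $p:X\rightarrow[0,1]$ with $\sum_{x\in X}p(x)=1$. For $\beta:G\rightarrow K$ and $k\in K$, $\langle k\rangle_\beta=\{x\in G\mid \beta(x)=k\}$, and $\Xi_\beta:\Lambda^G\rightarrow\Lambda^K$ is $(\Xi_\beta p)(k)=\sum_{x\in\langle k\rangle_\beta}p(x)$; $\Xi_\beta(U)=\{\Xi_\beta p\mid p\in U\}$. For a finite set $X$ and $f:X\rightarrow\mathbb R^+$, $\mathcal E_f(p)=\sum_{x\in X}f(x)p(x)$ (defined also for the zero function $p$), and the selection operator $\mathcal S_f:\Lambda^X\rightarrow\Lambda^X$ is $(\mathcal S_fp)(x)=f(x)p(x)/\mathcal E_f(p)$. The theme conditional operator gives, for $p\in\Lambda^G$ and $k\in K$, the function $\mathcal C_\beta(p,k):G\rightarrow[0,1]$ with $(\mathcal C_\beta(p,k))(x)=p(x)/(\Xi_\beta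 p)(k)$ if $\beta(x)=k$ and $(\Xi_\beta p)(k)>0$, and $(\mathcal C_\beta(p,k))(x)=0$ otherwise. For $\delta\ge0$, the thematic mean divergence of $f:G\rightarrow\mathbb R^+$ with respect to $f^*:K\rightarrow\mathbb R^+$ on $U$ under $\beta$ is bounded by $\delta$ if for all $p\in U$ and all $k\in K$, $|\mathcal E_f(\mathcal C_\beta(p,k))-f^*(k)|\le\delta$. For real-valued functions $g,h$ on a finite set $X$, $d(g,h)=\sum_{x\in X}|g(x)-h(x)|$. *)

theory Defs
  imports "HOL-Analysis.Analysis"
begin

text \<open>Finite sets G and K are modelled as finite types 'g and 'k.\<close>

definition prob_simplex :: "('a::finite \<Rightarrow> real) set" where
  "prob_simplex = {p. (\<forall>x. 0 \<le> p x \<and> p x \<le> 1) \<and> (\<Sum>x\<in>UNIV. p x) = 1}"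

definition theme_class :: "('g \<Rightarrow> 'k) \<Rightarrow> 'k \<Rightarrow> 'g set" where
  "theme_class \<beta> k = {x. \<beta> x = k}"

definition Xi :: "('g::finite \<Rightarrow> 'k) \<Rightarrow> ('g \<Rightarrow> real) \<Rightarrow> 'k \<Rightarrow> real" where
  "Xi \<beta> p k = (\<Sum>x\<in>theme_class \<beta> k. p x)"

definition expect :: "('a::finite \<Rightarrow> real) \<Rightarrow> ('a \<Rightarrow> real) \<Rightarrow> real" where
  "expect f p = (\<Sum>x\<in>UNIV. f x * p x)"

definition select :: "('a::finite \<Rightarrow> real) \<Rightarrow> ('a \<Rightarrow> real) \<Rightarrow> 'a \<Rightarrow> real" where
  "select f p x = f x * p x / expect f p"

definition cond :: "('g::finite \<Rightarrow> 'k) \<Rightarrow> ('g \<Rightarrow> real) \<Rightarrow> 'k \<Rightarrow> 'g \<Rightarrow> real" where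
  "cond \<beta> p k x = (if \<beta> x = k \<and> Xi \<beta> p k > 0 then p x / Xi \<beta> p k else 0)"

definition mean_div_bounded ::
  "('g::finite \<Rightarrow> real) \<Rightarrow> ('k::finite \<Rightarrow> real) \<Rightarrow> ('g \<Rightarrow> real) set \<Rightarrow> ('g \<Rightarrow> 'k) \<Rightarrow> real \<Rightarrow> bool" where
  "mean_div_bounded f fs U \<beta> \<delta> \<longleftrightarrow>
     (\<forall>p\<in>U. \<forall>k. \<bar>expect f (cond \<beta> p k) - fs k\<bar> \<le> \<delta>)"

definition dist1 :: "('a::finite \<Rightarrow> real) \<Rightarrow> ('a \<Rightarrow> real) \<Rightarrow> real" where
  "dist1 g h = (\<Sum>x\<in>UNIV. \<bar>g x - h x\<bar>)"

end

theory Submission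
  imports Defs
begin

lemma key_ineq:
  fixes A B q fs :: "'k::finite \<Rightarrow> real" and \<delta> Es :: real
  assumes qnn: "\<And>k. q k \<ge> 0" and qs: "(\<Sum>k\<in>UNIV. q k) = 1"
    and B: "\<And>k. B k = fs k * q k"
    and AB: "\<And>k. \<bar>A k - B k\<bar> \<le> \<delta> * q k"
    and Es: "Es = (\<Sum>k\<in>UNIV. B k)" and Espos: "Es > 0"
    and dl: "\<delta> < Es / 2" and fpos: "\<And>k. fs k > 0"
  shows "(\<Sum>k\<in>UNIV. \<bar>A k / (\<Sum>j\<in>UNIV. A j) - B k / Es\<bar>) \<le> 4 * \<delta> / Es"
proof -
  define E where "E = (\<Sum>j\<in>UNIV. A j)"
  have dE: "\<bar>E - Es\<bar> \<le> \<delta>"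
  proof -
    have "\<bar>E - Es\<bar> = \<bar>\<Sum>k\<in>UNIV. A k - B k\<bar>" by (simp add: E_def Es sum_subtractf)
    also have "\<dots> \<le> (\<Sum>k\<in>UNIV. \<bar>A k - B k\<bar>)" by (rule sum_abs)
    also have "\<dots> \<le> (\<Sum>k\<in>UNIV. \<delta> * q k)" by (rule sum_mono) (rule AB)
    also have "\<dots> = \<delta>" by (simp add: sum_distrib_left[symmetric] qs)
    finally show ?thesis .
  qed
  have Eh: "E \<ge> Es / 2" using dE dl by linarith
  hence Epos: "E > 0" using Espos by linarith
  have Bnn: "\<And>k. B k \<ge> 0" using B qnn fpos by (simp add: less_imp_le)
  have pt: "\<bar>A k / E - B k / Es\<bar> \<le> \<delta> * q k / E + B k * \<bar>Es - E\<bar> / (E * Es)" for k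
  proof -
    have "A k / E - B k / Es = (A k - B k) / E + B k * (Es - E) / (E * Es)"
      using Epos Espos by (simp add: field_simps)
    also have "\<bar>\<dots>\<bar> \<le> \<bar>(A k - B k) / E\<bar> + \<bar>B k * (Es - E) / (E * Es)\<bar>" by (rule abs_triangle_ineq)
    also have "\<bar>(A k - B k) / E\<bar> = \<bar>A k - B k\<bar> / E" using Epos by simp
    also have "\<bar>B k * (Es - E) / (E * Es)\<bar> = B k * \<bar>Es - E\<bar> / (E * Es)"
      using Epos Espos Bnn[of k] by (simp add: abs_mult)
    also have "\<bar>A k - B k\<bar> / E \<le> \<delta> * q k / E" using AB[of k] Epos by (simp add: divide_right_mono)
    finally show ?thesis by simp
  qed
  have "(\<Sum>k\<in>UNIV. \<bar>A k / E - B k / Es\<bar>) \<le> (\<Sum>k\<in>UNIV. \<delta> * q k / E + B k * \<bar>Es - E\<bar> / (E * Es))"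
    by (rule sum_mono) (rule pt)
  also have "\<dots> = \<delta> * (\<Sum>k\<in>UNIV. q k) / E + (\<Sum>k\<in>UNIV. B k) * \<bar>Es - E\<bar> / (E * Es)"
    by (simp add: sum.distrib sum_divide_distrib[symmetric] sum_distrib_left sum_distrib_right)
  also have "\<dots> = \<delta> / E + \<bar>Es - E\<bar> / E" using Espos by (simp add: qs Es[symmetric])
  also have "\<dots> \<le> 2 * \<delta> / E" using dE Epos by (simp add: divide_right_mono abs_minus_commute add_divide_distrib[symmetric])
  also have "\<dots> \<le> 4 * \<delta> / Es"
  proof -
    have "\<delta> \<ge> 0" using dE by linarith
    hence "0 \<le> 2 * \<delta> * (2 * E - Es)" using Eh by (intro mult_nonneg_nonneg) auto
    hence "2 * \<delta> * Es \<le> 4 * \<delta> * E" by (simp add: algebra_simps)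
    thus ?thesis using Epos Espos by (simp add: field_simps)
  qed
  finally show ?thesis by (simp add: E_def)
qed

theorem theorem2:
  fixes \<beta> :: "'g::finite \<Rightarrow> 'k::finite"
    and U :: "('g \<Rightarrow> real) set"
    and fs :: "'k \<Rightarrow> real"
  assumes surj: "surj \<beta>"
    and U_sub: "U \<subseteq> prob_simplex"
    and U_img: "Xi \<beta> ` U = prob_simplex"
    and fs_pos: "\<forall>k. fs k > 0"
  shows "\<forall>p\<in>U. \<forall>\<epsilon>>0. \<exists>\<delta>'>0. \<forall>\<delta> f. 0 \<le> \<delta> \<and> \<delta> < \<delta>' \<and> (\<forall>x. f x > 0)
            \<and> mean_div_bounded f fs U \<beta> \<delta>
            \<longrightarrow> dist1 (Xi \<beta> (select f p)) (select fs (Xi \<beta> p)) < \<epsilon>"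
proof (intro ballI allI impI)
  fix p \<epsilon> assume pU: "p \<in> U" and ep: "(\<epsilon>::real) > 0"
  have pnn: "\<And>x. p x \<ge> 0" and ps: "(\<Sum>x\<in>UNIV. p x) = 1"
    using pU U_sub by (auto simp: prob_simplex_def)
  define q where "q = Xi \<beta> p"
  have qnn: "\<And>k. q k \<ge> 0" unfolding q_def Xi_def by (simp add: sum_nonneg pnn)
  have grp: "\<And>h::'g \<Rightarrow> real. (\<Sum>k\<in>UNIV. (\<Sum>x\<in>theme_class \<beta> k. h x)) = (\<Sum>x\<in>UNIV. h x)"
    using sum.group[of "UNIV::'g set" "UNIV::'k set" \<beta>] by (simp add: theme_class_def)
  have qs: "(\<Sum>k\<in>UNIV. q k) = 1" unfolding q_def Xi_def using grp ps by simp
  define Es where "Es = (\<Sum>k\<in>UNIV. fs k * q k)"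
  have Espos: "Es > 0"
  proof -
    obtain k where "q k > 0"
    proof (rule ccontr)
      assume "\<not> thesis"
      have "q k = 0" for k using qnn[of k] that[of k] \<open>\<not> thesis\<close> by force
      hence "\<And>k. q k = 0" by blast
      thus False using qs by simp
    qed
    hence "fs k * q k > 0" using fs_pos by simp
    moreover have "(\<Sum>j\<in>UNIV. fs j * q j) \<ge> fs k * q k"
      by (rule member_le_sum) (auto intro: mult_nonneg_nonneg less_imp_le fs_pos[rule_format] qnn)
    ultimately show ?thesis unfolding Es_def by linarith
  qed
  show "\<exists>\<delta>'>0. \<forall>\<delta> f. 0 \<le> \<delta> \<and> \<delta> < \<delta>' \<and> (\<forall>x. f x > 0)
            \<and> mean_div_bounded f fs U \<beta> \<delta>
            \<longrightarrow> dist1 (Xi \<beta> (select f p)) (select fs (Xi \<beta> p)) < \<epsilon>"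
  proof (intro exI[of _ "min (Es/2) (\<epsilon> * Es / 4)"] conjI allI impI)
    show "min (Es/2) (\<epsilon> * Es / 4) > 0" using Espos ep by simp
    fix \<delta> f
    assume H: "0 \<le> \<delta> \<and> \<delta> < min (Es / 2) (\<epsilon> * Es / 4) \<and> (\<forall>x. f x > 0) \<and> mean_div_bounded f fs U \<beta> \<delta>"
    hence fpos: "\<And>x. f x > 0" and md: "\<And>k. \<bar>expect f (cond \<beta> p k) - fs k\<bar> \<le> \<delta>"
      using pU by (auto simp: mean_div_bounded_def)
    define A where "A k = (\<Sum>x\<in>theme_class \<beta> k. f x * p x)" for k
    have AB: "\<bar>A k - fs k * q k\<bar> \<le> \<delta> * q k" for k
    proof (cases "q k > 0")
      case True
      have "expect f (cond \<beta> p k) = (\<Sum>x\<in>UNIV. if \<beta> x = k then f x * p x / q k else 0)"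
        unfolding expect_def cond_def using True by (intro sum.cong) (auto simp: q_def)
      also have "\<dots> = (\<Sum>x\<in>theme_class \<beta> k. f x * p x / q k)"
        by (simp add: sum.If_cases theme_class_def Collect_conj_eq[symmetric])
      also have "\<dots> = A k / q k" by (simp add: A_def sum_divide_distrib)
      finally have "\<bar>A k / q k - fs k\<bar> \<le> \<delta>" using md[of k] by simp
      hence "\<bar>A k / q k - fs k\<bar> * q k \<le> \<delta> * q k" using True by (simp add: mult_right_mono)
      moreover have "\<bar>A k / q k - fs k\<bar> * q k = \<bar>A k - fs k * q k\<bar>"
        proof -
        have "\<bar>A k / q k - fs k\<bar> * q k = \<bar>(A k / q k - fs k) * q k\<bar>" using True by (simp add: abs_mult)
        also have "(A k / q k - fs k) * q k = A k - fs k * q k" using True by (simp add: field_simps)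
        finally show ?thesis .
      qed
      ultimately show ?thesis by simp
    next
      case False
      hence q0: "q k = 0" using qnn[of k] by simp
      hence "\<forall>x\<in>theme_class \<beta> k. p x = 0"
        unfolding q_def Xi_def using sum_nonneg_eq_0_iff[of "theme_class \<beta> k" p] pnn by simp
      hence "A k = 0" by (simp add: A_def)
      thus ?thesis using q0 by simp
    qed
    have EA: "expect f p = (\<Sum>k\<in>UNIV. A k)" unfolding expect_def A_def using grp by simp
    have lhs: "Xi \<beta> (select f p) k = A k / (\<Sum>j\<in>UNIV. A j)" for k
      unfolding Xi_def select_def A_def[of k] EA by (simp add: sum_divide_distrib)
    have rhs: "select fs (Xi \<beta> p) k = fs k * q k / Es" for k
      unfolding select_def expect_def Es_def q_def by simp
    have "dist1 (Xi \<beta> (select f p)) (select fs (Xi \<beta> p))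
        = (\<Sum>k\<in>UNIV. \<bar>A k / (\<Sum>j\<in>UNIV. A j) - fs k * q k / Es\<bar>)"
      unfolding dist1_def lhs rhs by simp
    also have "\<dots> \<le> 4 * \<delta> / Es"
      by (rule key_ineq[where fs=fs and q=q]) (use qnn qs AB Es_def Espos H fs_pos in auto)
    also have "\<dots> < \<epsilon>" using H Espos by (simp add: field_simps)
    finally show "dist1 (Xi \<beta> (select f p)) (select fs (Xi \<beta> p)) < \<epsilon>" .
  qed
qed

end
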